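(* $\beta(3,13,4) = 7$.
   Context: For integers $v \ge k \ge 2$, a $(v,k)$-packing is a pair $(X,\mathcal{B})$ where $X$ is a set of $v$ points and $\mathcal{B}$ is a set of $k$-subsets of $X$ (blocks) such that every pair of distinct points lies in at most one block. A partial parallel class (PPC) is a set of pairwise disjoint blocks; its size is the number of blocks. A PPC of size $\rho$ is maximum if the packing has no PPC of size $\rho+1$. $\beta(\rho,v,k)$ denotes the maximum number of blocks in a $(v,k)$-packing in which the maximum PPC has size $\rho$. *)

theory Defs
  imports Main
begin

definition packing :: "'a set \<Rightarrow> nat \<Rightarrow> nat \<Rightarrow> 'a set set \<Rightarrow> bool" where
  "packing X v k \<B> \<longleftrightarrow> finite X \<and> card X = v \<and>
     (\<forall>b\<in>\<B>. b \<subseteq> X \<and> card b = k) \<and>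
     (\<forall>x y. x \<noteq> y \<longrightarrow> card {b\<in>\<B>. x \<in> b \<and> y \<in> b} \<le> 1)"

definition ppc :: "'a set set \<Rightarrow> 'a set set \<Rightarrow> bool" where
  "ppc \<B> P \<longleftrightarrow> P \<subseteq> \<B> \<and> pairwise disjnt P"

definition max_ppc_size :: "'a set set \<Rightarrow> nat \<Rightarrow> bool" where
  "max_ppc_size \<B> \<rho> \<longleftrightarrow> (\<exists>P. ppc \<B> P \<and> finite P \<and> card P = \<rho>) \<and>
     \<not> (\<exists>P. ppc \<B> P \<and> finite P \<and> card P = \<rho> + 1)"

definition beta :: "nat \<Rightarrow> nat \<Rightarrow> nat \<Rightarrow> nat" where
  "beta \<rho> v k = Max {card \<B> | \<B>. packing {..<v} v k \<B> \<and> max_ppc_size \<B> \<rho>}"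

end

theory Submission
  imports Defs
begin

lemma pk_fin: "packing X v k B \<Longrightarrow> finite B"
  unfolding packing_def by (meson PowI finite_Pow_iff finite_subset subsetI)

lemma pk_pair:
  assumes "packing X v k B" "x \<noteq> y" "b \<in> B" "b' \<in> B" "x \<in> b" "y \<in> b" "x \<in> b'" "y \<in> b'"
  shows "b = b'"
proof -
  have f: "finite {c\<in>B. x \<in> c \<and> y \<in> c}" using pk_fin[OF assms(1)] by simp
  have "card {c\<in>B. x \<in> c \<and> y \<in> c} \<le> Suc 0" using assms(1,2) unfolding packing_def by simp
  then show ?thesis using card_le_Suc0_iff_eq[OF f] assms by blast
qed

lemma no4:
  assumes "packing {..<13::nat} 13 4 B" "ppc B P" "finite P" "card P = 4"
  shows False
proof -
  have bl: "\<And>b. b \<in> P \<Longrightarrow> b \<subseteq> {..<13} \<and> card b = 4"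
    using assms(1,2) unfolding packing_def ppc_def by blast
  have "card (\<Union>P) = sum card P"
    by (rule card_Union_disjoint) (use assms(2) bl in \<open>auto simp: ppc_def intro: finite_subset\<close>)
  also have "\<dots> = sum (\<lambda>_. 4) P" using bl by simp
  also have "\<dots> = 16" using assms(4) by simp
  finally have "card (\<Union>P) = 16" .
  moreover have "card (\<Union>P) \<le> card {..<13::nat}" by (rule card_mono) (use bl in auto)
  ultimately show False by simp
qed

lemma upper:
  assumes pk: "packing {..<13::nat} 13 4 B" and pp: "ppc B P" "finite P" "card P = 3"
  shows "card B \<le> 7"
proof -
  have finB: "finite B" using pk_fin[OF pk] .
  have bl: "\<And>b. b \<in> B \<Longrightarrow> b \<subseteq> {..<13} \<and> card b = 4"
    using pk unfolding packing_def by blast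
  obtain A1 A2 A3 where P: "P = {A1,A2,A3}" "A1 \<noteq> A2" "A2 \<noteq> A3" "A1 \<noteq> A3"
    using pp(3) card_3_iff by metis
  have inB: "A1 \<in> B" "A2 \<in> B" "A3 \<in> B" using pp(1) P unfolding ppc_def by auto
  have dj: "A1 \<inter> A2 = {}" "A1 \<inter> A3 = {}" "A2 \<inter> A3 = {}"
    using pp(1) P unfolding ppc_def pairwise_def disjnt_def by auto
  have fA: "finite A1" "finite A2" "finite A3" using bl inB by (meson finite_lessThan finite_subset)+
  have cA: "card A1 = 4" "card A2 = 4" "card A3 = 4" using bl inB by auto
  define U where "U = A1 \<union> A2 \<union> A3"
  have cU: "card U = 12" unfolding U_def
    using card_Un_disjoint[of "A1 \<union> A2" A3] card_Un_disjoint[of A1 A2] fA cA dj by auto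
  have UX: "U \<subseteq> {..<13}" unfolding U_def using bl inB by auto
  have "card ({..<13} - U) = 1" using card_Diff_subset[OF _ UX] cU fA unfolding U_def by simp
  then obtain w where w: "{..<13} - U = {w}" by (rule card_1_singletonE)
  have key: "\<And>C A. C \<in> B \<Longrightarrow> A \<in> B \<Longrightarrow> C \<noteq> A \<Longrightarrow> card (C \<inter> A) \<le> Suc 0"
  proof -
    fix C A assume h: "C \<in> B" "A \<in> B" "C \<noteq> A"
    have "finite (C \<inter> A)" using bl h by (meson finite_Int finite_lessThan finite_subset)
    then show "card (C \<inter> A) \<le> Suc 0" using card_le_Suc0_iff_eq pk_pair[OF pk _ h(1,2)] h(3) by blast
  qed
  have pC: "w \<in> C \<and> card (C \<inter> A1) = 1" if C: "C \<in> B - P" for C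
  proof -
    have CB: "C \<in> B" and CP: "C \<noteq> A1" "C \<noteq> A2" "C \<noteq> A3" using C P by auto
    have k: "card (C \<inter> A1) \<le> 1" "card (C \<inter> A2) \<le> 1" "card (C \<inter> A3) \<le> 1"
      using key[OF CB inB(1) CP(1)] key[OF CB inB(2) CP(2)] key[OF CB inB(3) CP(3)] by auto
    have "C \<subseteq> {..<13}" using bl CB by auto
    hence Ceq: "C = (C \<inter> A1) \<union> (C \<inter> A2) \<union> (C \<inter> A3) \<union> (C \<inter> {w})" using w unfolding U_def by blast
    have "card C \<le> card (C \<inter> A1) + card (C \<inter> A2) + card (C \<inter> A3) + card (C \<inter> {w})"
      by (subst Ceq) (meson card_Un_le le_trans add_le_mono order_refl)
    moreover have "card (C \<inter> {w}) \<le> 1" by (metis card_mono finite.emptyI finite.insertI inf_le2 is_singletonI is_singleton_altdef)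
    moreover have "card C = 4" using bl CB by auto
    ultimately have "card (C \<inter> {w}) = 1" "card (C \<inter> A1) = 1" using k by linarith+
    then show ?thesis by (cases "w \<in> C") auto
  qed
  define f where "f C = the_elem (C \<inter> A1)" for C
  have fprop: "f C \<in> C \<and> f C \<in> A1 \<and> w \<in> C" if hC: "C \<in> B - P" for C
  proof -
    obtain a where "C \<inter> A1 = {a}" using pC[OF hC] card_1_singletonE by blast
    then show ?thesis using pC[OF hC] unfolding f_def by auto
  qed
  have wU: "w \<notin> U" using w by auto
  have inj: "inj_on f (B - P)"
  proof (rule inj_onI)
    fix C C' assume h: "C \<in> B - P" "C' \<in> B - P" "f C = f C'"
    have "f C \<noteq> w" using fprop[OF h(1)] wU unfolding U_def by auto
    then show "C = C'" using pk_pair[OF pk _ _ _ _ _ _ _, of "f C" w C C'] fprop[OF h(1)] fprop[OF h(2)] h by auto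
  qed
  have "f ` (B - P) \<subseteq> A1" using fprop by auto
  hence "card (B - P) \<le> 4" using card_inj_on_le[OF inj _ fA(1)] cA by auto
  moreover have "card (B - P) = card B - 3" using card_Diff_subset[of P B] pp finB unfolding ppc_def by simp
  ultimately show ?thesis by linarith
qed

lemma card_via:
  assumes "finite A" "card (f ` A) = n" "set L = A" "length L = n"
  shows "card A = n"
proof -
  have "card (f ` A) \<le> card A" using card_image_le assms(1) by blast
  moreover have "card A \<le> n" using card_length[of L] assms(3,4) by simp
  ultimately show ?thesis using assms(2) by linarith
qed

definition Bx :: "nat set set" where
  "Bx = {{0,1,2,3},{4,5,6,7},{8,9,10,11},{12,0,4,8},{12,1,5,9},{12,2,6,10},{12,3,7,11}}"

lemma Bx_bl: "\<forall>b\<in>Bx. b \<subseteq> {..<13} \<and> card b = 4" unfolding Bx_def by auto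
lemma Bx_fin: "finite Bx" unfolding Bx_def by simp
lemma Bx_fin2: "\<And>b. b \<in> Bx \<Longrightarrow> finite b" using Bx_bl by (meson finite_lessThan finite_subset)
lemma Bx_inter0: "\<forall>b\<in>Bx. \<forall>b'\<in>Bx. b \<noteq> b' \<longrightarrow> card (b \<inter> b') \<le> 1"
    unfolding Bx_def by simp
lemma Bx_inter: "\<And>b b'. b \<in> Bx \<Longrightarrow> b' \<in> Bx \<Longrightarrow> b \<noteq> b' \<Longrightarrow> card (b \<inter> b') \<le> 1"
    using Bx_inter0 by blast
lemma Bx_pair: "card {b\<in>Bx. x \<in> b \<and> y \<in> b} \<le> 1" if "x \<noteq> y" for x y
proof -
  have f1: "finite {b\<in>Bx. x \<in> b \<and> y \<in> b}" using Bx_fin by simp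
  have "\<forall>b\<in>{b\<in>Bx. x \<in> b \<and> y \<in> b}. \<forall>b'\<in>{b\<in>Bx. x \<in> b \<and> y \<in> b}. b = b'"
  proof (intro ballI, rule ccontr)
    fix b b' assume h: "b \<in> {b\<in>Bx. x \<in> b \<and> y \<in> b}" "b' \<in> {b\<in>Bx. x \<in> b \<and> y \<in> b}" "b \<noteq> b'"
    have bb: "b \<in> Bx" "b' \<in> Bx" using h(1,2) by simp_all
    have sub: "{x,y} \<subseteq> b \<inter> b'" using h(1,2) by simp
    have "finite (b \<inter> b')" using Bx_fin2[OF bb(1)] by simp
    then have "card {x,y} \<le> card (b \<inter> b')" using sub card_mono by blast
    then show False using Bx_inter[OF bb h(3)] that by simp
  qed
  then show ?thesis using card_le_Suc0_iff_eq[OF f1] by simp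
qed

lemma Bx_pack: "packing {..<13::nat} 13 4 Bx"
  unfolding packing_def
proof (intro conjI)
  show "finite {..<13::nat}" by (rule finite_lessThan)
  show "card {..<13::nat} = 13" by (rule card_lessThan)
  show "\<forall>x y. x \<noteq> y \<longrightarrow> card {b\<in>Bx. x \<in> b \<and> y \<in> b} \<le> 1" using Bx_pair by blast
qed (rule Bx_bl)

lemma Bx_card: "card Bx = 7"
proof (rule card_via[OF Bx_fin])
  show "card (sum id ` Bx) = 7"
  proof -
    have "sum id ` Bx = {6,22,38,24,27,30,33}" unfolding Bx_def by simp
    then show ?thesis by simp
  qed
  let ?L = "[{0,1,2,3},{4,5,6,7},{8,9,10,11},{12,0,4,8},{12,1,5,9},{12,2,6,10},{12,3,7,11}] :: nat set list"
  show "set ?L = Bx" unfolding Bx_def list.set by (rule refl)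
  show "length ?L = 7" by simp
qed

lemma Bx_ppc: "max_ppc_size Bx 3"
proof -
  define P0 :: "nat set set" where "P0 = {{0,1,2,3},{4,5,6,7},{8,9,10,11}}"
  have s1: "P0 \<subseteq> Bx" unfolding P0_def Bx_def by (intro insert_subsetI empty_subsetI; (rule insertI1 | rule insertI2)+)
  have s2: "pairwise disjnt P0" unfolding P0_def by (auto simp: pairwise_insert disjnt_def)
  have f: "finite P0" unfolding P0_def by simp
  have c: "card P0 = 3"
  proof (rule card_via[OF f])
    show "card (sum id ` P0) = 3"
    proof -
      have "sum id ` P0 = {6,22,38}" unfolding P0_def by simp
      then show ?thesis by simp
    qed
    let ?L = "[{0,1,2,3},{4,5,6,7},{8,9,10,11}] :: nat set list"
    show "set ?L = P0" unfolding P0_def list.set by (rule refl)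
    show "length ?L = 3" by simp
  qed
  have e: "\<exists>P. ppc Bx P \<and> finite P \<and> card P = 3"
    using s1 s2 c f unfolding ppc_def by blast
  have n: "\<not> (\<exists>P. ppc Bx P \<and> finite P \<and> card P = 3 + 1)" using no4[OF Bx_pack] by (simp only: numeral_3_eq_3 numeral_eq_Suc) auto
  show ?thesis unfolding max_ppc_size_def using e n by blast
qed

theorem theorem4p8:
  shows "beta 3 13 4 = 7"
  unfolding beta_def
proof (rule Max_eqI)
  let ?S = "{card \<B> | \<B>. packing {..<13::nat} 13 4 \<B> \<and> max_ppc_size \<B> 3}"
  have b: "\<And>y. y \<in> ?S \<Longrightarrow> y \<le> 7"
    using upper unfolding max_ppc_size_def by blast
  show "\<And>y. y \<in> ?S \<Longrightarrow> y \<le> 7" by (rule b)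
  show "finite ?S" using b by (meson finite_nat_set_iff_bounded_le)
  have "7 = card Bx \<and> packing {..<13::nat} 13 4 Bx \<and> max_ppc_size Bx 3"
    using Bx_pack Bx_ppc Bx_card by simp
  then show "7 \<in> ?S" by blast
qed

end
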